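(* Let $C_\varphi$ be a bounded composition operator on $\mathcal F(\mathbb C^d)$. Let $p\ge2$ and $\lambda\in\mathbb D^p$ with $\lambda_{p-1}=\lambda_p$. Suppose $L_1,\dots,L_p\in\mathcal F(\mathbb C^d)$ are polynomials with $C_\varphi L_i=\lambda_iL_i$ for $i=1,\dots,p-1$ and $C_\varphi L_p=\lambda_{p-1}L_p+L_{p-1}$. Then there is $J\in\mathbb N$ such that for all $j\ge J$, all $n\in\mathbb N$ and all $D\subset\{\alpha\in\mathbb N^p:|\alpha|=n\}$, $$C_\varphi^j\Big(\sum_{\alpha\in D}L^\alpha\Big)=\sum_{\alpha\in\mathbb N^p,\,|\alpha|=n}c(\alpha,D,j)L^\alpha$$ for some complex numbers $c(\alpha,D,j)$ with $|c(\alpha,D,j)|\le1$.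
   Context: $\mathcal F(\mathbb C^d)$ is the Fock space of entire functions with $\|f\|^2=(2\pi)^{-d}\int_{\mathbb C^d}|f|^2e^{-|z|^2/2}dA<\infty$; $C_\varphi f=f\circ\varphi$, bounded iff $\varphi(z)=Az+b$, $\|A\|\le1$, $\langle Av,b\rangle=0$ whenever $|Av|=|v|$. $\mathbb D$ is the open unit disc. For $\alpha\in\mathbb N^p$, $|\alpha|=\sum\alpha_i$ and $L^\alpha=\prod_{i=1}^pL_i^{\alpha_i}$. *)

theory Defs
  imports "HOL-Analysis.Analysis"
begin

text \<open>Points of C^d are vectors of type complex^'n, with d = CARD('n).
  Entire functions on C^d: complex (Frechet) differentiable everywhere,
  i.e. the real derivative is complex linear.\<close>

definition cd_entire :: "(complex^'n \<Rightarrow> complex) \<Rightarrow> bool" where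
  "cd_entire f \<longleftrightarrow> (\<forall>z. \<exists>D. (f has_derivative D) (at z) \<and>
      (\<forall>(c::complex) x. D (\<chi> i. c * x $ i) = c * D x))"

definition fock_space :: "(complex^'n \<Rightarrow> complex) set" where
  "fock_space = {f. cd_entire f \<and>
      integrable lborel (\<lambda>z::complex^'n. (cmod (f z))\<^sup>2 * exp (- (norm z)\<^sup>2 / 2))}"

definition fock_norm :: "(complex^'n \<Rightarrow> complex) \<Rightarrow> real" where
  "fock_norm f = sqrt ((2 * pi) powr (- real CARD('n)) *
      (\<integral>z. (cmod (f z))\<^sup>2 * exp (- (norm z)\<^sup>2 / 2) \<partial>lborel))"

definition bounded_comp_op :: "(complex^'n \<Rightarrow> complex^'n) \<Rightarrow> bool" where
  "bounded_comp_op \<phi> \<longleftrightarrow> (\<forall>f\<in>fock_space. f \<circ> \<phi> \<in> fock_space) \<and>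
      (\<exists>M. \<forall>f\<in>fock_space. fock_norm (f \<circ> \<phi>) \<le> M * fock_norm f)"

definition cd_polynomial :: "(complex^'n \<Rightarrow> complex) \<Rightarrow> bool" where
  "cd_polynomial f \<longleftrightarrow> (\<exists>(S::('n \<Rightarrow> nat) set) c. finite S \<and>
      (\<forall>z. f z = (\<Sum>\<alpha>\<in>S. c \<alpha> * (\<Prod>i\<in>UNIV. (z $ i) ^ \<alpha> i))))"

definition multi_idx :: "nat \<Rightarrow> nat \<Rightarrow> (nat \<Rightarrow> nat) set" where
  "multi_idx p n = {\<alpha>. (\<forall>i. i \<notin> {1..p} \<longrightarrow> \<alpha> i = 0) \<and> (\<Sum>i=1..p. \<alpha> i) = n}"

definition Lpow :: "nat \<Rightarrow> (nat \<Rightarrow> 'a \<Rightarrow> complex) \<Rightarrow> (nat \<Rightarrow> nat) \<Rightarrow> 'a \<Rightarrow> complex" where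
  "Lpow p L \<alpha> z = (\<Prod>i=1..p. (L i z) ^ \<alpha> i)"

end

theory Submission
  imports Defs
begin

lemma split3: "p \<ge> 2 \<Longrightarrow> {1..p} = insert p (insert (p-1) {1..p-2::nat})" by auto
lemma split2: "p \<ge> 2 \<Longrightarrow> {1..p-1} = insert (p-1) {1..p-2::nat}" by auto

lemma prod_split3: assumes "(p::nat) \<ge> 2" shows "(\<Prod>i=1..p. g i) = (\<Prod>i=1..p-2. g i) * g (p-1) * (g p :: 'a::comm_monoid_mult)"
  proof -
  have nm: "p \<notin> insert (p-1) {1..p-2}" "p-1 \<notin> {1..p-2}" using assms by auto
  show ?thesis unfolding split3[OF assms] by (subst prod.insert[OF _ nm(1)], simp, subst prod.insert[OF _ nm(2)], simp, simp add: mult_ac)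
qed
lemma sum_split3: assumes "(p::nat) \<ge> 2" shows "(\<Sum>i=1..p. g i) = (\<Sum>i=1..p-2. g i) + g (p-1) + (g p :: 'a::comm_monoid_add)"
  proof -
  have nm: "p \<notin> insert (p-1) {1..p-2}" "p-1 \<notin> {1..p-2}" using assms by auto
  show ?thesis unfolding split3[OF assms] by (subst sum.insert[OF _ nm(1)], simp, subst sum.insert[OF _ nm(2)], simp, simp add: add_ac)
qed
lemma prod_split2: assumes "(p::nat) \<ge> 2" shows "(\<Prod>i=1..p-1. g i) = (\<Prod>i=1..p-2. g i) * (g (p-1) :: 'a::comm_monoid_mult)"
  proof -
  have nm: "p \<notin> insert (p-1) {1..p-2}" "p-1 \<notin> {1..p-2}" using assms by auto
  show ?thesis unfolding split2[OF assms] by (subst prod.insert[OF _ nm(2)], simp, simp add: mult_ac)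
qed

lemma finite_multi_idx: "finite (multi_idx p n)"
proof -
  let ?g = "\<lambda>f::nat\<Rightarrow>nat. \<lambda>i. if i \<in> {1..p} then f i else 0"
  have "multi_idx p n \<subseteq> ?g ` (PiE {1..p} (\<lambda>_. {0..n}))"
  proof
    fix \<alpha> assume a: "\<alpha> \<in> multi_idx p n"
    have "\<alpha> = ?g (restrict \<alpha> {1..p})" using a by (auto simp: multi_idx_def)
    moreover have "restrict \<alpha> {1..p} \<in> PiE {1..p} (\<lambda>_. {0..n})"
    proof -
      have "\<alpha> i \<le> n" if "i \<in> {1..p}" for i
        using a that member_le_sum[of i "{1..p}" \<alpha>] by (auto simp: multi_idx_def)
      then show ?thesis by auto
    qed
    ultimately show "\<alpha> \<in> ?g ` (PiE {1..p} (\<lambda>_. {0..n}))" by blast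
  qed
  then show ?thesis by (rule finite_subset) (auto intro: finite_PiE)
qed

lemma iter_eig:
  fixes f :: "'b \<Rightarrow> 'a::comm_ring_1"
  assumes "\<forall>z. f (\<phi> z) = l * f z"
  shows "f ((\<phi> ^^ j) z) = l ^ j * f z"
  by (induction j) (auto simp: assms mult_ac)

lemma iter_gen:
  fixes f g :: "'b \<Rightarrow> 'a::comm_ring_1"
  assumes "\<forall>z. g (\<phi> z) = l * g z" "\<forall>z. f (\<phi> z) = l * f z + g z"
  shows "f ((\<phi> ^^ j) z) = l ^ j * f z + of_nat j * l ^ (j - 1) * g z"
proof (induction j)
  case 0 then show ?case by simp
next
  case (Suc j)
  have "f ((\<phi> ^^ Suc j) z) = l * f ((\<phi> ^^ j) z) + g ((\<phi> ^^ j) z)" using assms(2) by simp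
  also have "g ((\<phi> ^^ j) z) = l ^ j * g z" using iter_eig[OF assms(1)] .
  also have "f ((\<phi> ^^ j) z) = l ^ j * f z + of_nat j * l ^ (j - 1) * g z" by (rule Suc)
  finally have e: "f ((\<phi> ^^ Suc j) z) = l * (l ^ j * f z + of_nat j * l ^ (j - 1) * g z) + l ^ j * g z" .
  show ?case unfolding e by (cases j) (auto simp: algebra_simps)
qed


definition coef :: "nat \<Rightarrow> (nat \<Rightarrow> complex) \<Rightarrow> complex \<Rightarrow> complex \<Rightarrow> (nat\<Rightarrow>nat) \<Rightarrow> (nat\<Rightarrow>nat) \<Rightarrow> complex" where
 "coef p \<mu> a b \<alpha> \<beta> = (if (\<forall>i. i \<noteq> p-1 \<and> i \<noteq> p \<longrightarrow> \<alpha> i = \<beta> i) \<and> \<beta> p \<le> \<alpha> p \<and> \<alpha> (p-1) + \<alpha> p = \<beta> (p-1) + \<beta> p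
    then of_nat (\<alpha> p choose \<beta> p) * a^(\<beta> p) * b^(\<alpha> p - \<beta> p) * (\<Prod>i=1..p-1. \<mu> i ^ \<alpha> i) else 0)"

lemma expand:
  fixes A x :: "nat \<Rightarrow> complex"
  assumes p2: "p \<ge> 2"
    and hA: "\<forall>i\<in>{1..p-1}. A i = \<mu> i * x i"
    and hAp: "A p = a * x p + b * x (p-1)"
    and al: "\<alpha> \<in> multi_idx p n"
  shows "(\<Prod>i=1..p. A i ^ \<alpha> i) = (\<Sum>\<beta>\<in>multi_idx p n. coef p \<mu> a b \<alpha> \<beta> * (\<Prod>i=1..p. x i ^ \<beta> i))"
proof -
  define m where "m = \<alpha> p"
  define bk where "bk k = \<alpha>(p-1 := \<alpha>(p-1) + m - k, p := k)" for k
  define X where "X \<beta> = (\<Prod>i=1..p. x i ^ \<beta> i)" for \<beta> :: "nat \<Rightarrow> nat"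
  define Q where "Q = (\<Prod>i=1..p-2. (\<mu> i * x i) ^ \<alpha> i)"
  have pp: "p - 1 \<noteq> p" using p2 by simp
  have bkp: "bk k p = k" for k by (simp add: bk_def)
  have bkp1: "bk k (p-1) = \<alpha>(p-1) + m - k" for k using pp by (simp add: bk_def)
  have bko: "i \<noteq> p-1 \<Longrightarrow> i \<noteq> p \<Longrightarrow> bk k i = \<alpha> i" for i k by (simp add: bk_def)
  have "(\<Prod>i=1..p. A i ^ \<alpha> i) = (\<Prod>i=1..p-2. A i ^ \<alpha> i) * A (p-1) ^ \<alpha> (p-1) * A p ^ m"
    using prod_split3[OF p2] m_def by simp
  also have "(\<Prod>i=1..p-2. A i ^ \<alpha> i) = Q" unfolding Q_def using hA by (intro prod.cong) auto
  also have "A (p-1) = \<mu> (p-1) * x (p-1)" using hA p2 by auto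
  also have "A p ^ m = (\<Sum>k\<le>m. of_nat (m choose k) * (a * x p)^k * (b * x (p-1))^(m-k))"
    unfolding hAp by (rule binomial_ring)
  finally have L: "(\<Prod>i=1..p. A i ^ \<alpha> i) = (\<Sum>k\<le>m. Q * (\<mu> (p-1) * x (p-1)) ^ \<alpha> (p-1) * (of_nat (m choose k) * (a * x p)^k * (b * x (p-1))^(m-k)))"
    by (simp add: sum_distrib_left)
  have T: "Q * (\<mu> (p-1) * x (p-1)) ^ \<alpha> (p-1) * (of_nat (m choose k) * (a * x p)^k * (b * x (p-1))^(m-k))
      = coef p \<mu> a b \<alpha> (bk k) * X (bk k)" if k: "k \<le> m" for k
  proof -
    have c: "coef p \<mu> a b \<alpha> (bk k) = of_nat (m choose k) * a^k * b^(m-k) * (\<Prod>i=1..p-1. \<mu> i ^ \<alpha> i)"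
      unfolding coef_def using bko bkp bkp1 k m_def by auto
    have x: "X (bk k) = (\<Prod>i=1..p-2. x i ^ \<alpha> i) * x (p-1) ^ (\<alpha>(p-1) + (m - k)) * x p ^ k"
    proof -
      have "X (bk k) = (\<Prod>i=1..p-2. x i ^ bk k i) * x (p-1) ^ bk k (p-1) * x p ^ bk k p"
        unfolding X_def by (rule prod_split3[OF p2])
      also have "(\<Prod>i=1..p-2. x i ^ bk k i) = (\<Prod>i=1..p-2. x i ^ \<alpha> i)"
        using bko by (intro prod.cong) auto
      finally show ?thesis using bkp bkp1 k by simp
    qed
    have q: "Q = (\<Prod>i=1..p-2. \<mu> i ^ \<alpha> i) * (\<Prod>i=1..p-2. x i ^ \<alpha> i)"
      unfolding Q_def by (simp add: power_mult_distrib prod.distrib)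
    show ?thesis unfolding c x q prod_split2[OF p2]
      by (simp add: power_mult_distrib power_add mult_ac)
  qed
  have inj: "inj_on bk {..m}" by (rule inj_onI) (metis bkp)
  have img: "bk ` {..m} \<subseteq> multi_idx p n"
  proof
    fix \<beta> assume "\<beta> \<in> bk ` {..m}"
    then obtain k where k: "k \<le> m" "\<beta> = bk k" by auto
    have "(\<Sum>i=1..p. bk k i) = (\<Sum>i=1..p-2. bk k i) + bk k (p-1) + bk k p" by (rule sum_split3[OF p2])
    also have "(\<Sum>i=1..p-2. bk k i) = (\<Sum>i=1..p-2. \<alpha> i)" using bko by (intro sum.cong) auto
    also have "(\<Sum>i=1..p-2. \<alpha> i) + bk k (p-1) + bk k p = (\<Sum>i=1..p. \<alpha> i)"
      unfolding sum_split3[OF p2] using bkp bkp1 k m_def by simp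
    finally have s: "(\<Sum>i=1..p. bk k i) = n" using al by (simp add: multi_idx_def)
    have "\<forall>i. i \<notin> {1..p} \<longrightarrow> bk k i = 0" using al bko p2 by (auto simp: multi_idx_def)
    then show "\<beta> \<in> multi_idx p n" using s k by (simp add: multi_idx_def)
  qed
  have zero: "coef p \<mu> a b \<alpha> \<beta> * X \<beta> = 0" if "\<beta> \<in> multi_idx p n - bk ` {..m}" for \<beta>
  proof (rule ccontr)
    assume "coef p \<mu> a b \<alpha> \<beta> * X \<beta> \<noteq> 0"
    then have cond: "(\<forall>i. i \<noteq> p-1 \<and> i \<noteq> p \<longrightarrow> \<alpha> i = \<beta> i) \<and> \<beta> p \<le> \<alpha> p \<and> \<alpha> (p-1) + \<alpha> p = \<beta> (p-1) + \<beta> p"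
      unfolding coef_def by (auto split: if_splits)
    have "\<beta> = bk (\<beta> p)"
    proof
      fix i show "\<beta> i = bk (\<beta> p) i"
        using cond bkp bkp1 bko m_def by (cases "i = p"; cases "i = p - 1") auto
    qed
    moreover have "\<beta> p \<le> m" using cond m_def by simp
    ultimately show False using that by auto
  qed
  have "(\<Sum>\<beta>\<in>multi_idx p n. coef p \<mu> a b \<alpha> \<beta> * X \<beta>) = (\<Sum>\<beta>\<in>bk ` {..m}. coef p \<mu> a b \<alpha> \<beta> * X \<beta>)"
    using zero img finite_multi_idx by (intro sum.mono_neutral_right) auto
  also have "\<dots> = (\<Sum>k\<le>m. coef p \<mu> a b \<alpha> (bk k) * X (bk k))" by (rule sum.reindex[OF inj, unfolded comp_def])
  finally show ?thesis unfolding L X_def[symmetric] using T by simp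
qed




lemma coef_bound1:
  assumes p2: "p \<ge> 2" and t0: "t \<ge> 0"
    and hmu: "\<forall>i\<in>{1..p-1}. cmod (\<mu> i) \<le> 1" and hmu1: "cmod (\<mu> (p-1)) \<le> t"
    and ha: "cmod a \<le> t" and hb: "cmod b \<le> t"
    and cond: "(\<forall>i. i \<noteq> p-1 \<and> i \<noteq> p \<longrightarrow> \<alpha> i = \<beta> i) \<and> \<beta> p \<le> \<alpha> p \<and> \<alpha> (p-1) + \<alpha> p = \<beta> (p-1) + \<beta> p"
  shows "cmod (coef p \<mu> a b \<alpha> \<beta>) \<le> 2 ^ (\<beta> (p-1) + \<beta> p) * t ^ (\<beta> (p-1) + \<beta> p)"
proof -
  define N where "N = \<beta> (p-1) + \<beta> p"
  have pr: "(\<Prod>i=1..p-1. cmod (\<mu> i) ^ \<alpha> i) \<le> t ^ \<alpha> (p-1)"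
  proof -
    have "(\<Prod>i=1..p-1. cmod (\<mu> i) ^ \<alpha> i) = (\<Prod>i=1..p-2. cmod (\<mu> i) ^ \<alpha> i) * cmod (\<mu> (p-1)) ^ \<alpha> (p-1)"
      by (rule prod_split2[OF p2])
    also have "\<dots> \<le> 1 * t ^ \<alpha> (p-1)"
    proof (rule mult_mono)
      show "(\<Prod>i=1..p-2. cmod (\<mu> i) ^ \<alpha> i) \<le> 1"
        using hmu by (intro prod_le_1) (auto intro: power_le_one)
      show "cmod (\<mu> (p-1)) ^ \<alpha> (p-1) \<le> t ^ \<alpha> (p-1)" using hmu1 by (intro power_mono) auto
    qed auto
    finally show ?thesis by simp
  qed
  have cm: "cmod (coef p \<mu> a b \<alpha> \<beta>) = real (\<alpha> p choose \<beta> p) * cmod a ^ \<beta> p * cmod b ^ (\<alpha> p - \<beta> p) * (\<Prod>i=1..p-1. cmod (\<mu> i) ^ \<alpha> i)"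
    using cond unfolding coef_def by (simp add: norm_mult norm_power flip: prod_norm)
  also have "\<dots> \<le> real (\<alpha> p choose \<beta> p) * t ^ \<beta> p * t ^ (\<alpha> p - \<beta> p) * t ^ \<alpha> (p-1)"
    by (intro mult_mono power_mono pr ha hb) (auto intro: prod_nonneg simp: t0)
  also have "\<dots> = real (\<alpha> p choose \<beta> p) * t ^ N"
  proof -
    have "\<beta> p + (\<alpha> p - \<beta> p) + \<alpha> (p-1) = N" using cond N_def by simp
    then show ?thesis by (metis power_add mult.assoc)
  qed
  also have "\<dots> \<le> 2 ^ N * t ^ N"
  proof (rule mult_right_mono)
    have "\<alpha> p choose \<beta> p \<le> 2 ^ \<alpha> p" by (rule binomial_le_pow2)
    also have "(2::nat) ^ \<alpha> p \<le> 2 ^ N" using cond N_def by (intro power_increasing) auto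
    finally show "real (\<alpha> p choose \<beta> p) \<le> 2 ^ N" by (metis of_nat_le_iff of_nat_numeral of_nat_power)
  qed (use t0 in auto)
  finally show ?thesis unfolding N_def .
qed

lemma coef_bound:
  assumes p2: "p \<ge> 2" and t0: "t \<ge> 0" and t4: "4 * t \<le> 1"
    and hmu: "\<forall>i\<in>{1..p-1}. cmod (\<mu> i) \<le> 1" and hmu1: "cmod (\<mu> (p-1)) \<le> t"
    and ha: "cmod a \<le> t" and hb: "cmod b \<le> t" and fin: "finite D"
  shows "(\<Sum>\<alpha>\<in>D. cmod (coef p \<mu> a b \<alpha> \<beta>)) \<le> 1"
proof -
  define N where "N = \<beta> (p-1) + \<beta> p"
  define S where "S = {\<alpha>\<in>D. coef p \<mu> a b \<alpha> \<beta> \<noteq> 0}"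
  have condS: "(\<forall>i. i \<noteq> p-1 \<and> i \<noteq> p \<longrightarrow> \<alpha> i = \<beta> i) \<and> \<beta> p \<le> \<alpha> p \<and> \<alpha> (p-1) + \<alpha> p = \<beta> (p-1) + \<beta> p"
    if "\<alpha> \<in> S" for \<alpha> using that unfolding S_def coef_def by (auto split: if_splits)
  have pp: "p - 1 \<noteq> p" using p2 by simp
  have "S \<subseteq> (\<lambda>s. \<beta>(p-1 := N - s, p := s)) ` {..N}"
  proof
    fix \<alpha> assume a: "\<alpha> \<in> S"
    note c = condS[OF a]
    have "\<alpha> = \<beta>(p-1 := N - \<alpha> p, p := \<alpha> p)"
    proof
      fix i show "\<alpha> i = (\<beta>(p-1 := N - \<alpha> p, p := \<alpha> p)) i"
        using c pp N_def by (cases "i = p"; cases "i = p - 1") auto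
    qed
    moreover have "\<alpha> p \<le> N" using c N_def by simp
    ultimately show "\<alpha> \<in> (\<lambda>s. \<beta>(p-1 := N - s, p := s)) ` {..N}" by blast
  qed
  then have "card S \<le> card ((\<lambda>s. \<beta>(p-1 := N - s, p := s)) ` {..N})" by (intro card_mono) auto
  also have "\<dots> \<le> card {..N}" by (rule card_image_le) simp
  finally have cS: "card S \<le> N + 1" by simp
  have "(\<Sum>\<alpha>\<in>D. cmod (coef p \<mu> a b \<alpha> \<beta>)) = (\<Sum>\<alpha>\<in>S. cmod (coef p \<mu> a b \<alpha> \<beta>))"
    unfolding S_def using fin by (intro sum.mono_neutral_right) auto
  also have "\<dots> \<le> of_nat (card S) * (2 ^ N * t ^ N)"
    using coef_bound1[OF p2 t0 hmu hmu1 ha hb condS] N_def by (intro sum_bounded_above) auto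
  also have "\<dots> \<le> of_nat (N + 1) * (2 ^ N * t ^ N)"
    using cS t0 by (intro mult_right_mono) auto
  also have "\<dots> \<le> 2 ^ N * (2 ^ N * t ^ N)"
  proof (rule mult_right_mono)
    have "N + 1 \<le> (2::nat) ^ N" using less_exp[of N] by linarith
    then show "real (N + 1) \<le> 2 ^ N" by (metis of_nat_le_iff of_nat_numeral of_nat_power)
  qed (use t0 in auto)
  also have "\<dots> = (2 * 2 * t) ^ N" by (simp only: power_mult_distrib mult.assoc)
  also have "\<dots> = (4 * t) ^ N" by simp
  also have "\<dots> \<le> 1" using t0 t4 by (intro power_le_one) auto
  finally show ?thesis .
qed



theorem mainTheorem7:
  fixes \<phi> :: "complex^'n \<Rightarrow> complex^'n"
    and p :: nat
    and lam :: "nat \<Rightarrow> complex"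
    and L :: "nat \<Rightarrow> complex^'n \<Rightarrow> complex"
  assumes bdd: "bounded_comp_op \<phi>"
    and p2: "p \<ge> 2"
    and lam_disc: "\<forall>i\<in>{1..p}. cmod (lam i) < 1"
    and lam_eq: "lam (p - 1) = lam p"
    and L_poly: "\<forall>i\<in>{1..p}. cd_polynomial (L i) \<and> L i \<in> fock_space"
    and L_eig: "\<forall>i\<in>{1..p-1}. \<forall>z. L i (\<phi> z) = lam i * L i z"
    and L_gen: "\<forall>z. L p (\<phi> z) = lam (p - 1) * L p z + L (p - 1) z"
  shows "\<exists>J::nat. \<forall>j\<ge>J. \<forall>n::nat. \<forall>D. D \<subseteq> multi_idx p n \<longrightarrow>
           (\<exists>c::(nat \<Rightarrow> nat) \<Rightarrow> complex.
              (\<forall>\<alpha>\<in>multi_idx p n. cmod (c \<alpha>) \<le> 1) \<and>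
              (\<forall>z. (\<Sum>\<alpha>\<in>D. Lpow p L \<alpha> ((\<phi> ^^ j) z)) =
                   (\<Sum>\<alpha>\<in>multi_idx p n. c \<alpha> * Lpow p L \<alpha> z)))"
proof -
  define r where "r = cmod (lam (p-1))"
  have r1: "r < 1" using lam_disc p2 unfolding r_def by auto
  have r0: "r \<ge> 0" unfolding r_def by simp
  have "(\<lambda>n. of_nat n * r ^ n) \<longlonglongrightarrow> 0" using r0 r1 by (intro powser_times_n_limit_0) auto
  then have "(\<lambda>n. of_nat n * r ^ n + r ^ n) \<longlonglongrightarrow> 0 + 0"
    using r0 r1 by (intro tendsto_add LIMSEQ_power_zero) auto
  then have "(\<lambda>n. real (Suc n) * r ^ n) \<longlonglongrightarrow> 0" by (simp add: algebra_simps)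
  then have "eventually (\<lambda>n. real (Suc n) * r ^ n < 1/4) sequentially"
    by (rule order_tendstoD(2)) simp
  then obtain J0 where J0: "\<And>n. n \<ge> J0 \<Longrightarrow> real (Suc n) * r ^ n < 1/4"
    unfolding eventually_sequentially by blast
  have main: "\<exists>c::(nat \<Rightarrow> nat) \<Rightarrow> complex.
              (\<forall>\<alpha>\<in>multi_idx p n. cmod (c \<alpha>) \<le> 1) \<and>
              (\<forall>z. (\<Sum>\<alpha>\<in>D. Lpow p L \<alpha> ((\<phi> ^^ j) z)) =
                   (\<Sum>\<alpha>\<in>multi_idx p n. c \<alpha> * Lpow p L \<alpha> z))"
    if j: "j \<ge> Suc J0" and D: "D \<subseteq> multi_idx p n" for j n D
  proof -
    define t where "t = real j * r ^ (j - 1)"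
    have jj: "j = Suc (j - 1)" using j by simp
    have t4: "4 * t \<le> 1"
    proof -
      have "real (Suc (j - 1)) * r ^ (j - 1) < 1/4" using J0[of "j-1"] j by auto
      then show ?thesis unfolding t_def using jj by (metis less_imp_le mult.commute pos_less_divide_eq zero_less_numeral divide_inverse mult_1 le_divide_eq_numeral1(1))
    qed
    have t0: "t \<ge> 0" unfolding t_def using r0 by simp
    define \<mu> where "\<mu> i = lam i ^ j" for i
    define a where "a = lam (p-1) ^ j"
    define b where "b = of_nat j * lam (p-1) ^ (j-1)"
    have rj: "r ^ j \<le> t"
    proof -
      have "r ^ j = r * r ^ (j-1)" by (subst jj) simp
      also have "\<dots> \<le> 1 * r ^ (j-1)" using r0 r1 by (intro mult_right_mono) auto
      also have "\<dots> \<le> real j * r ^ (j-1)" using j r0 by (intro mult_right_mono) auto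
      finally show ?thesis unfolding t_def .
    qed
    have hmu: "\<forall>i\<in>{1..p-1}. cmod (\<mu> i) \<le> 1"
    proof
      fix i assume "i \<in> {1..p-1}"
      then have "cmod (lam i) \<le> 1" using lam_disc by (auto intro: less_imp_le)
      then show "cmod (\<mu> i) \<le> 1" unfolding \<mu>_def norm_power by (intro power_le_one) auto
    qed
    have hmu1: "cmod (\<mu> (p-1)) \<le> t" using rj unfolding \<mu>_def r_def by (simp add: norm_power)
    have ha: "cmod a \<le> t" using rj unfolding a_def r_def by (simp add: norm_power)
    have hb: "cmod b \<le> t" unfolding b_def t_def r_def by (simp add: norm_mult norm_power)
    have finD: "finite D" using D finite_multi_idx finite_subset by blast
    define c where "c \<beta> = (\<Sum>\<alpha>\<in>D. coef p \<mu> a b \<alpha> \<beta>)" for \<beta>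
    have bound: "cmod (c \<beta>) \<le> 1" for \<beta>
    proof -
      have "cmod (c \<beta>) \<le> (\<Sum>\<alpha>\<in>D. cmod (coef p \<mu> a b \<alpha> \<beta>))" unfolding c_def by (rule norm_sum)
      also have "\<dots> \<le> 1" by (rule coef_bound[OF p2 t0 t4 hmu hmu1 ha hb finD])
      finally show ?thesis .
    qed
    have eig1: "\<forall>z. L (p-1) (\<phi> z) = lam (p-1) * L (p-1) z" using L_eig p2 by auto
    have ident: "(\<Sum>\<alpha>\<in>D. Lpow p L \<alpha> ((\<phi> ^^ j) z)) = (\<Sum>\<alpha>\<in>multi_idx p n. c \<alpha> * Lpow p L \<alpha> z)" for z
    proof -
      have hA: "\<forall>i\<in>{1..p-1}. L i ((\<phi> ^^ j) z) = \<mu> i * L i z"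
        using L_eig unfolding \<mu>_def by (auto intro: iter_eig)
      have hAp: "L p ((\<phi> ^^ j) z) = a * L p z + b * L (p-1) z"
        unfolding a_def b_def using iter_gen[OF eig1 L_gen] by (simp add: mult.assoc)
      have "(\<Sum>\<alpha>\<in>D. Lpow p L \<alpha> ((\<phi> ^^ j) z)) =
          (\<Sum>\<alpha>\<in>D. \<Sum>\<beta>\<in>multi_idx p n. coef p \<mu> a b \<alpha> \<beta> * Lpow p L \<beta> z)"
      proof (rule sum.cong[OF refl])
        fix \<alpha> assume "\<alpha> \<in> D"
        then have al: "\<alpha> \<in> multi_idx p n" using D by auto
        show "Lpow p L \<alpha> ((\<phi> ^^ j) z) = (\<Sum>\<beta>\<in>multi_idx p n. coef p \<mu> a b \<alpha> \<beta> * Lpow p L \<beta> z)"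
          unfolding Lpow_def
          by (rule expand[where A="\<lambda>i. L i ((\<phi> ^^ j) z)" and x="\<lambda>i. L i z", OF p2 hA hAp al])
      qed
      also have "\<dots> = (\<Sum>\<beta>\<in>multi_idx p n. \<Sum>\<alpha>\<in>D. coef p \<mu> a b \<alpha> \<beta> * Lpow p L \<beta> z)"
        by (rule sum.swap)
      also have "\<dots> = (\<Sum>\<beta>\<in>multi_idx p n. c \<beta> * Lpow p L \<beta> z)"
        unfolding c_def by (simp add: sum_distrib_right)
      finally show ?thesis .
    qed
    show ?thesis using bound ident by blast
  qed
  show ?thesis by (rule exI[of _ "Suc J0"]) (use main in blast)
qed

end
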